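(* Let $\Psi:[t_0,\infty)\to\mathbb{R}_+$ be a non-decreasing positive function and let $f$ be an essentially sub-linear dimension function. If $\sum_{q} q\,f\!\left(\frac{1}{q^2\Psi(q)}\right)<\infty$, then $\sum_{q}\sum_{1\le p\le q} f\!\left(\frac{1}{pq\Psi(q)}\right)<\infty$, where $q$ ranges over integers $q\ge t_0$ and $p$ over integers.
   Context: A dimension function is an increasing continuous function $f:\mathbb{R}_+\to\mathbb{R}_+$ with $f(r)\to 0$ as $r\to 0$. It is essentially sub-linear if there exists $B>1$ such that $\limsup_{x\to 0}\frac{f(Bx)}{f(x)}<B$. *)

theory Defs
  imports "HOL-Analysis.Analysis" "HOL-Library.Extended_Real"
begin

definition dimension_function :: "(real \<Rightarrow> real) \<Rightarrow> bool" where
  "dimension_function f \<longleftrightarrow>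
     mono_on {0..} f \<and> continuous_on {0..} f \<and> (\<forall>x\<ge>0. f x \<ge> 0) \<and>
     (f \<longlongrightarrow> 0) (at_right 0)"

definition essentially_sublinear :: "(real \<Rightarrow> real) \<Rightarrow> bool" where
  "essentially_sublinear f \<longleftrightarrow>
     (\<exists>B>1. Limsup (at_right 0) (\<lambda>x. ereal (f (B * x) / f x)) < ereal B)"

end

theory Submission
  imports Defs
begin

lemma core_aux:
  fixes f :: "real \<Rightarrow> real" and B c \<delta> y :: real
  assumes mono: "mono_on {0..} f" and nn: "\<forall>x\<ge>0. f x \<ge> 0" and B: "B > 1"
    and c: "0 \<le> c" "c < B" and key: "\<forall>x. 0<x \<and> x<\<delta> \<longrightarrow> f (B*x) \<le> c * f x"
    and y: "0<y" "y<\<delta>"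
  shows "\<forall>t. 1 \<le> t \<longrightarrow> t < B^n \<longrightarrow>
     (\<Sum>p=1..nat \<lfloor>t\<rfloor>. f (y / real p)) \<le> (c*B/(B-c)) * t * f (y/t)"
proof (induction n)
  case 0
  then show ?case by simp
next
  case (Suc n)
  show ?case
  proof (intro allI impI)
    fix t :: real assume t1: "1 \<le> t" and tB: "t < B ^ Suc n"
    define K where "K = c*B/(B-c)"
    define a where "a = nat \<lfloor>t/B\<rfloor>"
    define b where "b = nat \<lfloor>t\<rfloor>"
    have Bpos: "B > 0" using B by simp
    have ab: "a \<le> b" unfolding a_def b_def using Bpos B t1
      by (intro nat_mono floor_mono) (simp add: divide_le_eq)
    have "y*1 \<le> y*t" using y t1 by (intro mult_left_mono) auto
    then have "y/t \<le> y" using t1 by (simp add: divide_le_eq)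
    then have yt: "0 < y/t" "y/t < \<delta>" using y t1 by auto
    have fyt: "f (B*(y/t)) \<le> c * f (y/t)" using key yt by blast
    have fnn: "0 \<le> f (y/t)" using nn yt by auto
    have Kge: "K * c / B + c = K" unfolding K_def using B c
      by (simp add: field_simps)
    have split: "{1..b} = {1..a} \<union> {Suc a..b}" using ab by auto
    have S: "(\<Sum>p=1..b. f (y / real p)) = (\<Sum>p=1..a. f (y / real p)) + (\<Sum>p=Suc a..b. f (y / real p))"
      unfolding split by (rule sum.union_disjoint) auto
    have first: "(\<Sum>p=1..a. f (y / real p)) \<le> K * (t/B) * (c * f (y/t))"
    proof (cases "1 \<le> t/B")
      case True
      have "t/B < B^n" using tB Bpos by (simp add: divide_less_eq mult.commute)
      then have "(\<Sum>p=1..a. f (y / real p)) \<le> K * (t/B) * f (y/(t/B))"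
        using Suc.IH True unfolding a_def K_def by blast
      also have "y/(t/B) = B*(y/t)" by simp
      also have "K * (t/B) * f (B*(y/t)) \<le> K * (t/B) * (c * f (y/t))"
        apply (rule mult_left_mono[OF fyt])
        unfolding K_def using c t1 Bpos by simp
      finally show ?thesis .
    next
      case False
      then have "a = 0" unfolding a_def by simp
      then show ?thesis unfolding K_def using c t1 Bpos fnn by simp
    qed
    have second: "(\<Sum>p=Suc a..b. f (y / real p)) \<le> t * (c * f (y/t))"
    proof -
      have "(\<Sum>p=Suc a..b. f (y / real p)) \<le> of_nat (card {Suc a..b}) * (c * f (y/t))"
      proof (rule sum_bounded_above)
        fix p assume p: "p \<in> {Suc a..b}"
        have "t/B < real p"
        proof -
          have "t/B < real_of_int \<lfloor>t/B\<rfloor> + 1" by linarith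
          moreover have "real_of_int \<lfloor>t/B\<rfloor> \<le> real a" unfolding a_def by linarith
          moreover have "real a + 1 \<le> real p" using p by auto
          ultimately show ?thesis by linarith
        qed
        have p1: "real p \<ge> 1" using p by auto
        have "y / real p \<le> B*(y/t)"
        proof -
          have "t \<le> B * real p" using \<open>t/B < real p\<close> Bpos by (simp add: divide_less_eq mult.commute)
          then show ?thesis using y t1 p1 Bpos by (simp add: field_simps)
        qed
        moreover have "0 \<le> y / real p" using y p1 by simp
        ultimately have "f (y / real p) \<le> f (B*(y/t))"
          using mono by (intro mono_onD[OF mono]) (auto simp: Bpos less_imp_le yt)
        then show "f (y / real p) \<le> c * f (y/t)" using fyt by linarith
      qed
      also have "of_nat (card {Suc a..b}) \<le> t"
        unfolding b_def using t1 by simp linarith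
      then have "of_nat (card {Suc a..b}) * (c * f (y/t)) \<le> t * (c * f (y/t))"
        by (rule mult_right_mono) (use c fnn in simp)
      finally show ?thesis .
    qed
    have "(\<Sum>p=1..b. f (y / real p)) \<le> K * (t/B) * (c * f (y/t)) + t * (c * f (y/t))"
      using S first second by linarith
    also have "\<dots> = t * f (y/t) * (K * c / B + c)" by (simp add: field_simps)
    also have "\<dots> = K * t * f (y/t)" using Kge by simp
    finally show "(\<Sum>p=1..nat \<lfloor>t\<rfloor>. f (y / real p)) \<le> (c*B/(B-c)) * t * f (y/t)"
      unfolding b_def K_def .
  qed
qed

lemma core:
  fixes f :: "real \<Rightarrow> real" and B c \<delta> y t :: real
  assumes "mono_on {0..} f" "\<forall>x\<ge>0. f x \<ge> 0" "B > 1"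
    "0 \<le> c" "c < B" "\<forall>x. 0<x \<and> x<\<delta> \<longrightarrow> f (B*x) \<le> c * f x"
    "0<y" "y<\<delta>" "1 \<le> t"
  shows "(\<Sum>p=1..nat \<lfloor>t\<rfloor>. f (y / real p)) \<le> (c*B/(B-c)) * t * f (y/t)"
proof -
  obtain n where "t < B^n" using real_arch_pow[OF assms(3)] by blast
  then show ?thesis using core_aux[OF assms(1-8), of n] assms(9) by blast
qed

theorem mainTheorem5:
  fixes \<Psi> f :: "real \<Rightarrow> real" and t\<^sub>0 :: real
  assumes "mono_on {t\<^sub>0..} \<Psi>"
    and "\<forall>x\<ge>t\<^sub>0. \<Psi> x > 0"
    and "dimension_function f"
    and "essentially_sublinear f"
    and "(\<lambda>q::nat. real q * f (1 / (real q ^ 2 * \<Psi> (real q))))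
           summable_on {q. 1 \<le> q \<and> t\<^sub>0 \<le> real q}"
  shows "(\<lambda>q::nat. \<Sum>p=1..q. f (1 / (real p * real q * \<Psi> (real q))))
           summable_on {q. 1 \<le> q \<and> t\<^sub>0 \<le> real q}"
proof -
  have mono: "mono_on {0..} f" and nn: "\<forall>x\<ge>0. f x \<ge> 0"
    using assms(3) unfolding dimension_function_def by auto
  obtain B where B: "B > 1" and LS: "Limsup (at_right 0) (\<lambda>x. ereal (f (B * x) / f x)) < ereal B"
    using assms(4) unfolding essentially_sublinear_def by blast
  obtain c' where c': "Limsup (at_right 0) (\<lambda>x. ereal (f (B * x) / f x)) < ereal c'" "ereal c' < ereal B"
    using ereal_dense2[OF LS] by blast
  have "eventually (\<lambda>x. ereal (f (B * x) / f x) < ereal c') (at_right (0::real))"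
    using Limsup_lessD[OF c'(1)] .
  then obtain b :: real where b: "b > 0" "\<forall>x>0. x < b \<longrightarrow> ereal (f (B * x) / f x) < ereal c'"
    unfolding eventually_at_right[OF zero_less_one] by blast
  define c where "c = max c' 1"
  have c: "0 \<le> c" "c < B" using c'(2) B unfolding c_def by auto
  obtain \<delta> :: real where \<delta>: "\<delta> > 0" "\<forall>x. 0<x \<and> x<\<delta> \<longrightarrow> f (B*x) \<le> c * f x"
  proof (cases "\<exists>a>0. f a = 0")
    case True
    then obtain a where a: "a > 0" "f a = 0" by blast
    show ?thesis
    proof (rule that[of "a/B"])
      show "a/B > 0" using a B by simp
      show "\<forall>x. 0<x \<and> x<a/B \<longrightarrow> f (B*x) \<le> c * f x"
      proof (intro allI impI)
        fix x assume x: "0<x \<and> x<a/B"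
        have "B*x \<le> a" using x B by (simp add: field_simps)
        then have "f (B*x) \<le> f a" using x B a by (intro mono_onD[OF mono]) auto
        moreover have "0 \<le> c * f x" using c nn x by simp
        ultimately show "f (B*x) \<le> c * f x" using a by simp
      qed
    qed
  next
    case False
    show ?thesis
    proof (rule that[of b])
      show "b > 0" by fact
      show "\<forall>x. 0<x \<and> x<b \<longrightarrow> f (B*x) \<le> c * f x"
      proof (intro allI impI)
        fix x assume x: "0<x \<and> x<b"
        have fx: "f x > 0" using False nn x by (metis less_eq_real_def)
        have "f (B * x) / f x < c'" using b x by auto
        then have "f (B*x) < c' * f x" using fx by (simp add: divide_less_eq)
        moreover have "c' * f x \<le> c * f x" unfolding c_def using fx by (intro mult_right_mono) auto
        ultimately show "f (B*x) \<le> c * f x" by linarith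
      qed
    qed
  qed
  define K where "K = c*B/(B-c)"
  define A where "A = {q::nat. 1 \<le> q \<and> t\<^sub>0 \<le> real q}"
  have P0: "\<Psi> t\<^sub>0 > 0" using assms(2) by simp
  obtain N :: nat where N: "1 / (\<delta> * \<Psi> t\<^sub>0) < real N" using reals_Archimedean2 by blast
  have fin: "(\<lambda>q::nat. \<Sum>p=1..q. f (1 / (real p * real q * \<Psi> (real q)))) summable_on (A \<inter> {..<N})"
    by (rule summable_on_finite) auto
  have tail: "(\<lambda>q::nat. \<Sum>p=1..q. f (1 / (real p * real q * \<Psi> (real q)))) summable_on (A \<inter> {N..})"
  proof (rule summable_on_comparison_test)
    show "(\<lambda>q. K * (real q * f (1 / (real q ^ 2 * \<Psi> (real q))))) summable_on (A \<inter> {N..})"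
      by (rule summable_on_cmult_right, rule summable_on_subset[OF assms(5)]) (auto simp: A_def)
  next
    fix q assume q: "q \<in> A \<inter> {N..}"
    have q1: "real q \<ge> 1" and qt: "t\<^sub>0 \<le> real q" and qN: "N \<le> q" using q by (auto simp: A_def)
    have Pq: "\<Psi> (real q) \<ge> \<Psi> t\<^sub>0" using qt by (intro mono_onD[OF assms(1)]) auto
    define y where "y = 1 / (real q * \<Psi> (real q))"
    have y0: "0 < y" unfolding y_def using q1 Pq P0 by simp
    have "real N * \<Psi> t\<^sub>0 \<le> real q * \<Psi> (real q)"
      using qN Pq P0 by (intro mult_mono) auto
    moreover have "1 / \<delta> < real N * \<Psi> t\<^sub>0" using N P0 \<delta>(1) by (simp add: field_simps)
    ultimately have "1/\<delta> < real q * \<Psi> (real q)" by linarith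
    moreover have qp: "0 < real q * \<Psi> (real q)" using q1 Pq P0 by simp
    ultimately have "1 < \<delta> * (real q * \<Psi> (real q))" using \<delta>(1) by (simp add: field_simps)
    then have yd: "y < \<delta>" unfolding y_def using qp by (simp add: divide_less_eq mult.commute)
    have main: "(\<Sum>p=1..nat \<lfloor>real q\<rfloor>. f (y / real p)) \<le> K * real q * f (y / real q)"
      unfolding K_def by (rule core[OF mono nn B c \<delta>(2) y0 yd q1])
    have e1: "\<And>p. y / real p = 1 / (real p * real q * \<Psi> (real q))" unfolding y_def by simp
    have e2: "y / real q = 1 / (real q ^ 2 * \<Psi> (real q))" unfolding y_def by (simp add: power2_eq_square)
    show "(\<Sum>p=1..q. f (1 / (real p * real q * \<Psi> (real q)))) \<le> K * (real q * f (1 / (real q ^ 2 * \<Psi> (real q))))"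
      using main unfolding e1 e2 by (simp add: power2_eq_square mult.assoc)
    show "0 \<le> (\<Sum>p=1..q. f (1 / (real p * real q * \<Psi> (real q))))"
      using nn P0 Pq by (intro sum_nonneg) simp
  qed
  have "A = (A \<inter> {..<N}) \<union> (A \<inter> {N..})" by auto
  then show ?thesis unfolding A_def[symmetric]
    by (metis summable_on_Un_disjoint[OF fin tail] disjoint_iff lessThan_iff atLeast_iff Int_iff not_le)
qed

end
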